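(* Let $S$ be a simple $(l,r)$-framed algebra, $\alpha\in C_S$, $(d^1,c^1),(d^2,c^2)\in I_S$, $a\in S_{(0,\alpha)}$, $v_1\in S_{(d^1,c^1)}$, $v_2\in S_{(d^2,c^2)}$. Then for every $\gamma\in\mathbb{Z}_2^{d^1d^2}$, $a\cdot\big(v_1\cdot_{(d^1+d^2,(d^1+d^2)_\perp(c^1+c^2)+\gamma)}v_2\big)=(-1)^{\frac12|d^1\alpha|}(-1)^{|\alpha c^1|+|d^1d^2\alpha|+|\gamma\alpha|+|d^1\alpha c^2|}\,v_1\cdot_{(d^1+d^2,(d^1+d^2)_\perp(c^1+c^2+\alpha)+\gamma)}(a\cdot v_2)$, and $a\cdot(v_1\cdot v_2)=(-1)^{|d^1_\perp\alpha|+|d^1\alpha c^2|}(a\cdot v_1)\cdot v_2$.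
   Context: Let $\mathrm{IS}=\{0,\frac12,\frac1{16}\}$ with fusion rule $\star$ (values are subsets): $0\star h=h\star0=\{h\}$, $\frac12\star\frac12=\{0\}$, $\frac12\star\frac1{16}=\frac1{16}\star\frac12=\{\frac1{16}\}$, $\frac1{16}\star\frac1{16}=\{0,\frac12\}$; $A(h_0,h_1,h_2,h_3)=\{h: h\in h_2\star h_3,\ h_0\in h_1\star h\}$. For $h\in A(h_0,h_1,h_2,h_3)$, $h'\in A(h_0,h_2,h_1,h_3)$ define $B^{h,h'}_{h_0,h_1,h_2,h_3}$: $B_{*,0,*,*}=B_{*,*,0,*}=1$; $B_{*,\frac12,\frac12,*}=-1$; $B_{a,\frac12,\frac1{16},a'}=B_{a,\frac1{16},\frac12,a'}=i$ if $a$ or $a'$ is $\frac12$, else $-i$; $B^{b,b'}_{a,\frac1{16},\frac1{16},a'}=e^{-\pi i/8}\cdot\{1$ if $a,a'\ne\frac1{16},a=a'$; $i$ if $a,a'\neq\frac1{16},a\ne a'$; $\frac{1+i}2$ if $a=a'=\frac1{16},b=b'$; $\frac{1-i}2$ if $a=a'=\frac1{16},b\neq b'\}$. $\mathrm{IS}^{(l,r)}=\mathrm{IS}^l\times\mathrm{IS}^r$, $\lambda=(h_1,..,h_l,\bar h_1,..,\bar h_r)$, $s(\lambda)=\sum h_i-\sum\bar h_j$; $\star$, $A$ componentwise; $B^{\lambda,\lambda'}_{\lambda^0,\dots,\lambda^3}=\prod_{i\le l}B^{h_i,h'_i}_{h^0_i,\dots,h^3_i}\prod_{j\le r}\overline{B^{\bar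 h_j,\bar h'_j}_{\bar h^0_j,\dots,\bar h^3_j}}$. An $(l,r)$-framed algebra: finite-dimensional $\mathrm{IS}^{(l,r)}$-graded $S=\bigoplus S_\lambda$ over $\mathbb{C}$ with bilinear product, nonzero $1\in S_0$, $a\cdot_\lambda b$ the $S_\lambda$-component of $a\cdot b$, satisfying (FA1) $S_\lambda=0$ unless $s(\lambda)\in\mathbb{Z}$; (FA2) $S_0=\mathbb{C}1$, $1$ a two-sided unit; (FA3) $S_{\lambda^1}\cdot S_{\lambda^2}\subset\bigoplus_{\lambda\in\lambda^1\star\lambda^2}S_\lambda$; (FA4) $a_2\cdot_{\lambda^0}(a_1\cdot_{\lambda'}a_3)=\sum_{\lambda\in A(\lambda^0,\lambda^1,\lambda^2,\lambda^3)}B^{\lambda,\lambda'}_{\lambda^0,\lambda^1,\lambda^2,\lambda^3}a_1\cdot_{\lambda^0}(a_2\cdot_\lambda a_3)$ for $a_i\in S_{\lambda^i}$, $\lambda'\in A(\lambda^0,\lambda^2,\lambda^1,\lambda^3)$. Ideal: graded subspace $M$ with $S\cdot M\subset M$; simple: only ideals $0$ and $S$. Identify $\mathrm{IS}$ with $\{(d,c)\in\mathbb{Z}_2^2:dc=0\}$ via $0\leftrightarrow(0,0)$, $\frac12\leftrightarrow(0,1)$, $\frac1{16}\leftrightarrow(1,0)$, and componentwise $\mathrm{IS}^{(l,r)}$ with pairs $(d,c)\in(\mathbb{Z}_2^{l+r})^2$, $dc=0$ (componentwise product); $S_{(d,c)}$ is the graded piece. For $c\in\mathbb{Z}_2^{l+r}$,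 $|c|=|c|_l-|c|_r$ with $|c|_l,|c|_r$ the numbers of ones in the first $l$, last $r$ coordinates; $d_\perp=1^{l+r}+d$; $\mathbb{Z}_2^d=\{\gamma:d\gamma=\gamma\}$. $C_S=\{\alpha:S_{(0,\alpha)}\neq0\}$, $I_S=\{(d,c):S_{(d,c)}\ne0\}$. *)

theory Defs
  imports Complex_Main
begin

datatype IS = H0 | Hhalf | Hsix

fun hval :: "IS \<Rightarrow> rat" where
  "hval H0 = 0" | "hval Hhalf = 1/2" | "hval Hsix = 1/16"

fun fusion :: "IS \<Rightarrow> IS \<Rightarrow> IS set" where
  "fusion H0 h = {h}"
| "fusion h H0 = {h}"
| "fusion Hhalf Hhalf = {H0}"
| "fusion Hhalf Hsix = {Hsix}"
| "fusion Hsix Hhalf = {Hsix}"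
| "fusion Hsix Hsix = {H0, Hhalf}"

definition A0 :: "IS \<Rightarrow> IS \<Rightarrow> IS \<Rightarrow> IS \<Rightarrow> IS set" where
  "A0 h0 h1 h2 h3 = {h. h \<in> fusion h2 h3 \<and> h0 \<in> fusion h1 h}"

(* B^{h,h'}_{h0,h1,h2,h3}  (argument order: h h' h0 h1 h2 h3) *)
definition Bc :: "IS \<Rightarrow> IS \<Rightarrow> IS \<Rightarrow> IS \<Rightarrow> IS \<Rightarrow> IS \<Rightarrow> complex" where
  "Bc h h' h0 h1 h2 h3 =
    (if h1 = H0 \<or> h2 = H0 then 1
     else if h1 = Hhalf \<and> h2 = Hhalf then -1
     else if h1 = Hsix \<and> h2 = Hsix then
       cis (- pi / 8) *
         (if h0 \<noteq> Hsix \<and> h3 \<noteq> Hsix then (if h0 = h3 then 1 else \<i>)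
          else (if h = h' then (1 + \<i>) / 2 else (1 - \<i>) / 2))
     else (if h0 = Hhalf \<or> h3 = Hhalf then \<i> else - \<i>))"

(* IS^(l,r): lists of length l+r; first l entries are the h_i, last r are the bar h_j *)
definition lams :: "nat \<Rightarrow> nat \<Rightarrow> IS list set" where
  "lams l r = {la. length la = l + r}"

definition lzero :: "nat \<Rightarrow> nat \<Rightarrow> IS list" where
  "lzero l r = replicate (l + r) H0"

definition sdim :: "nat \<Rightarrow> nat \<Rightarrow> IS list \<Rightarrow> rat" where
  "sdim l r la = (\<Sum>i<l. hval (la ! i)) - (\<Sum>j\<in>{l..<l+r}. hval (la ! j))"

definition lfus :: "IS list \<Rightarrow> IS list \<Rightarrow> IS list set" where
  "lfus la1 la2 = {la. length la = length la1 \<and>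
      (\<forall>i<length la1. la ! i \<in> fusion (la1 ! i) (la2 ! i))}"

definition lA :: "IS list \<Rightarrow> IS list \<Rightarrow> IS list \<Rightarrow> IS list \<Rightarrow> IS list set" where
  "lA la0 la1 la2 la3 = {la. length la = length la0 \<and>
      (\<forall>i<length la0. la ! i \<in> A0 (la0 ! i) (la1 ! i) (la2 ! i) (la3 ! i))}"

definition lB :: "nat \<Rightarrow> nat \<Rightarrow> IS list \<Rightarrow> IS list \<Rightarrow> IS list \<Rightarrow> IS list \<Rightarrow> IS list \<Rightarrow> IS list \<Rightarrow> complex" where
  "lB l r la la' la0 la1 la2 la3 =
     (\<Prod>i<l. Bc (la ! i) (la' ! i) (la0 ! i) (la1 ! i) (la2 ! i) (la3 ! i)) *
     (\<Prod>j\<in>{l..<l+r}. cnj (Bc (la ! j) (la' ! j) (la0 ! j) (la1 ! j) (la2 ! j) (la3 ! j)))"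

definition graded_decomp :: "nat \<Rightarrow> nat \<Rightarrow> (IS list \<Rightarrow> 'v::ab_group_add set) \<Rightarrow> 'v \<Rightarrow> (IS list \<Rightarrow> 'v) \<Rightarrow> bool" where
  "graded_decomp l r G v x \<longleftrightarrow> (\<forall>la\<in>lams l r. x la \<in> G la) \<and> (\<forall>la. la \<notin> lams l r \<longrightarrow> x la = 0)
      \<and> v = (\<Sum>la\<in>lams l r. x la)"

definition comp :: "nat \<Rightarrow> nat \<Rightarrow> (IS list \<Rightarrow> 'v::ab_group_add set) \<Rightarrow> IS list \<Rightarrow> 'v \<Rightarrow> 'v" where
  "comp l r G la v = (THE x. graded_decomp l r G v x) la"

definition framed_algebra ::
  "nat \<Rightarrow> nat \<Rightarrow> (complex \<Rightarrow> 'v::ab_group_add \<Rightarrow> 'v) \<Rightarrow> (IS list \<Rightarrow> 'v set) \<Rightarrow> ('v \<Rightarrow> 'v \<Rightarrow> 'v) \<Rightarrow> 'v \<Rightarrow> bool" where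
  "framed_algebra l r sc G mult one \<longleftrightarrow>
     vector_space sc
   \<and> (\<exists>B. finite B \<and> module.span sc B = UNIV)
   \<and> (\<forall>la. module.subspace sc (G la))
   \<and> (\<forall>la. la \<notin> lams l r \<longrightarrow> G la = {0})
   \<and> (\<forall>v. \<exists>!x. graded_decomp l r G v x)
   \<and> (\<forall>a. Vector_Spaces.linear sc sc (mult a))
   \<and> (\<forall>b. Vector_Spaces.linear sc sc (\<lambda>a. mult a b))
   \<and> one \<noteq> 0 \<and> one \<in> G (lzero l r)
   \<comment> \<open>FA1\<close>
   \<and> (\<forall>la\<in>lams l r. G la \<noteq> {0} \<longrightarrow> sdim l r la \<in> \<int>)
   \<comment> \<open>FA2\<close>
   \<and> G (lzero l r) = {sc c one | c. True}
   \<and> (\<forall>a. mult one a = a \<and> mult a one = a)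
   \<comment> \<open>FA3\<close>
   \<and> (\<forall>la1\<in>lams l r. \<forall>la2\<in>lams l r. \<forall>a\<in>G la1. \<forall>b\<in>G la2.
        mult a b \<in> module.span sc (\<Union>la\<in>lfus la1 la2. G la))
   \<comment> \<open>FA4\<close>
   \<and> (\<forall>la0\<in>lams l r. \<forall>la1\<in>lams l r. \<forall>la2\<in>lams l r. \<forall>la3\<in>lams l r.
        \<forall>a1\<in>G la1. \<forall>a2\<in>G la2. \<forall>a3\<in>G la3. \<forall>la'\<in>lA la0 la2 la1 la3.
          comp l r G la0 (mult a2 (comp l r G la' (mult a1 a3))) =
          (\<Sum>la\<in>lA la0 la1 la2 la3. sc (lB l r la la' la0 la1 la2 la3)
               (comp l r G la0 (mult a1 (comp l r G la (mult a2 a3))))))"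

definition fa_ideal ::
  "nat \<Rightarrow> nat \<Rightarrow> (complex \<Rightarrow> 'v::ab_group_add \<Rightarrow> 'v) \<Rightarrow> (IS list \<Rightarrow> 'v set) \<Rightarrow> ('v \<Rightarrow> 'v \<Rightarrow> 'v) \<Rightarrow> 'v set \<Rightarrow> bool" where
  "fa_ideal l r sc G mult M \<longleftrightarrow>
     module.subspace sc M
   \<and> M = module.span sc (\<Union>la\<in>lams l r. M \<inter> G la)
   \<and> (\<forall>s. \<forall>m\<in>M. mult s m \<in> M)"

definition simple_framed_algebra ::
  "nat \<Rightarrow> nat \<Rightarrow> (complex \<Rightarrow> 'v::ab_group_add \<Rightarrow> 'v) \<Rightarrow> (IS list \<Rightarrow> 'v set) \<Rightarrow> ('v \<Rightarrow> 'v \<Rightarrow> 'v) \<Rightarrow> 'v \<Rightarrow> bool" where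
  "simple_framed_algebra l r sc G mult one \<longleftrightarrow>
     framed_algebra l r sc G mult one
   \<and> (\<forall>M. fa_ideal l r sc G mult M \<longrightarrow> M = {0} \<or> M = UNIV)"

(* Z_2 vectors as bool lists of length l+r *)
definition xorL :: "bool list \<Rightarrow> bool list \<Rightarrow> bool list" where
  "xorL x y = map2 (\<lambda>a b. a \<noteq> b) x y"

definition andL :: "bool list \<Rightarrow> bool list \<Rightarrow> bool list" where
  "andL x y = map2 (\<and>) x y"

definition perpL :: "bool list \<Rightarrow> bool list" where
  "perpL d = map Not d"

(* |c| = |c|_l - |c|_r *)
definition wt :: "nat \<Rightarrow> bool list \<Rightarrow> int" where
  "wt l c = int (length (filter id (take l c))) - int (length (filter id (drop l c)))"

definition Z2sub :: "bool list \<Rightarrow> bool list set" where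
  "Z2sub d = {\<gamma>. length \<gamma> = length d \<and> andL d \<gamma> = \<gamma>}"

(* identification IS ~ {(d,c) : dc = 0}: 0 ~ (0,0), 1/2 ~ (0,1), 1/16 ~ (1,0) *)
definition toIS :: "bool list \<Rightarrow> bool list \<Rightarrow> IS list" where
  "toIS d c = map2 (\<lambda>x y. if x then Hsix else if y then Hhalf else H0) d c"

definition valid_dc :: "nat \<Rightarrow> nat \<Rightarrow> bool list \<Rightarrow> bool list \<Rightarrow> bool" where
  "valid_dc l r d c \<longleftrightarrow> length d = l + r \<and> length c = l + r \<and> andL d c = replicate (l + r) False"

definition Sdc :: "(IS list \<Rightarrow> 'v set) \<Rightarrow> bool list \<Rightarrow> bool list \<Rightarrow> 'v set" where
  "Sdc G d c = G (toIS d c)"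

definition C_S :: "nat \<Rightarrow> nat \<Rightarrow> (IS list \<Rightarrow> 'v::zero set) \<Rightarrow> bool list set" where
  "C_S l r G = {\<alpha>. valid_dc l r (replicate (l + r) False) \<alpha> \<and> Sdc G (replicate (l + r) False) \<alpha> \<noteq> {0}}"

definition I_S :: "nat \<Rightarrow> nat \<Rightarrow> (IS list \<Rightarrow> 'v::zero set) \<Rightarrow> (bool list \<times> bool list) set" where
  "I_S l r G = {(d, c). valid_dc l r d c \<and> Sdc G d c \<noteq> {0}}"

end

theory Submission
  imports Defs
begin


definition toIS1 :: "bool \<Rightarrow> bool \<Rightarrow> IS" where
  "toIS1 d c = (if d then Hsix else if c then Hhalf else H0)"

lemma toIS_len[simp]: "length (toIS d c) = min (length d) (length c)" unfolding toIS_def by simp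
lemma toIS_nth[simp]: "i < length d \<Longrightarrow> i < length c \<Longrightarrow> toIS d c ! i = toIS1 (d ! i) (c ! i)"
  unfolding toIS_def toIS1_def by simp
lemma andL_len[simp]: "length (andL x y) = min (length x) (length y)" unfolding andL_def by simp
lemma andL_nth[simp]: "i < length x \<Longrightarrow> i < length y \<Longrightarrow> andL x y ! i = (x ! i \<and> y ! i)"
  unfolding andL_def by simp
lemma xorL_len[simp]: "length (xorL x y) = min (length x) (length y)" unfolding xorL_def by simp
lemma xorL_nth[simp]: "i < length x \<Longrightarrow> i < length y \<Longrightarrow> xorL x y ! i = (x ! i \<noteq> y ! i)"
  unfolding xorL_def by simp
lemma perpL_len[simp]: "length (perpL x) = length x" unfolding perpL_def by simp
lemma perpL_nth[simp]: "i < length x \<Longrightarrow> perpL x ! i = (\<not> x ! i)"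
  unfolding perpL_def by simp

definition PF :: "nat \<Rightarrow> nat \<Rightarrow> (nat \<Rightarrow> complex) \<Rightarrow> complex" where
  "PF l r f = (\<Prod>i<l. f i) * (\<Prod>j\<in>{l..<l+r}. cnj (f j))"

lemma lB_PF: "lB l r la la' a0 a1 a2 a3 = PF l r (\<lambda>i. Bc (la!i) (la'!i) (a0!i) (a1!i) (a2!i) (a3!i))"
  unfolding lB_def PF_def ..

lemma PF_mult: "PF l r (\<lambda>i. f i * g i) = PF l r f * PF l r g"
  unfolding PF_def by (simp add: prod.distrib)

lemma PF_cong: "(\<And>i. i < l + r \<Longrightarrow> f i = g i) \<Longrightarrow> PF l r f = PF l r g"
  unfolding PF_def by (intro arg_cong2[where f="(*)"] prod.cong) auto

lemma pow_filter: "(z::'a::comm_monoid_mult) ^ length (filter id xs) = (\<Prod>i<length xs. if xs ! i then z else 1)"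
proof (induction xs)
  case Nil then show ?case by simp
next
  case (Cons b xs)
  then show ?case by (simp add: prod.lessThan_Suc_shift del: prod.lessThan_Suc)
qed

lemma nat_filter: "(of_nat (length (filter id xs)) :: 'a::comm_semiring_1) = (\<Sum>i<length xs. if xs ! i then 1 else 0)"
proof (induction xs)
  case Nil then show ?case by simp
next
  case (Cons b xs)
  then show ?case by (simp add: sum.lessThan_Suc_shift del: sum.lessThan_Suc)
qed

lemma drop_shift: assumes "length x = l + r"
  shows "(\<Prod>i<length (drop l x). F (drop l x ! i)) = (\<Prod>j\<in>{l..<l+r}. F (x ! j))"
proof -
  have "(\<Prod>j\<in>{l..<l+r}. F (x ! j)) = (\<Prod>j\<in>{0+l..<r+l}. F (x ! j))" by (simp add: add.commute)
  also have "\<dots> = (\<Prod>i\<in>{0..<r}. F (x ! (i + l)))" by (rule prod.shift_bounds_nat_ivl)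
  finally show ?thesis using assms by (simp add: atLeast0LessThan add.commute)
qed

lemma drop_shift_sum: assumes "length x = l + r"
  shows "(\<Sum>i<length (drop l x). F (drop l x ! i)) = (\<Sum>j\<in>{l..<l+r}. F (x ! j))"
proof -
  have "(\<Sum>j\<in>{l..<l+r}. F (x ! j)) = (\<Sum>j\<in>{0+l..<r+l}. F (x ! j))" by (simp add: add.commute)
  also have "\<dots> = (\<Sum>i\<in>{0..<r}. F (x ! (i + l)))" by (rule sum.shift_bounds_nat_ivl)
  finally show ?thesis using assms by (simp add: atLeast0LessThan add.commute)
qed

lemma PF_powi: assumes z: "z \<noteq> 0" "cnj z = inverse z" and len: "length x = l + r"
  shows "z powi (wt l x) = PF l r (\<lambda>i. if x ! i then z else 1)"
proof -
  define p where "p = length (filter id (take l x))"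
  define q where "q = length (filter id (drop l x))"
  have p: "z ^ p = (\<Prod>i<l. if x ! i then z else 1)"
    unfolding p_def pow_filter using len by simp
  have q: "z ^ q = (\<Prod>j\<in>{l..<l+r}. if x ! j then z else 1)"
    unfolding q_def pow_filter using drop_shift[OF len, of "\<lambda>b. if b then z else 1"] by simp
  have "z powi (wt l x) = z ^ p / z ^ q"
    unfolding wt_def p_def[symmetric] q_def[symmetric] using z by (simp add: power_int_diff)
  also have "\<dots> = z ^ p * cnj (z ^ q)" using z by (simp add: divide_inverse power_inverse)
  also have "\<dots> = PF l r (\<lambda>i. if x ! i then z else 1)"
    unfolding PF_def p q cnj_prod by (intro arg_cong2[where f="(*)"] refl prod.cong; auto simp: z)
  finally show ?thesis .
qed

definition SD :: "nat \<Rightarrow> nat \<Rightarrow> (nat \<Rightarrow> rat) \<Rightarrow> rat" where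
  "SD l r f = (\<Sum>i<l. f i) - (\<Sum>j\<in>{l..<l+r}. f j)"

lemma sdim_SD: "sdim l r la = SD l r (\<lambda>i. hval (la ! i))" unfolding sdim_def SD_def ..

lemma wt_SD: assumes len: "length x = l + r"
  shows "of_int (wt l x) = SD l r (\<lambda>i. if x ! i then 1 else 0)"
proof -
  have p: "(of_nat (length (filter id (take l x))) :: rat) = (\<Sum>i<l. if x ! i then 1 else 0)"
    unfolding nat_filter using len by simp
  have q: "(of_nat (length (filter id (drop l x))) :: rat) = (\<Sum>j\<in>{l..<l+r}. if x ! j then 1 else 0)"
    unfolding nat_filter using drop_shift_sum[OF len, of "\<lambda>b. if b then 1 else 0"] by simp
  show ?thesis unfolding wt_def SD_def using p q by simp
qed

lemma SD_diff: "SD l r (\<lambda>i. f i - g i) = SD l r f - SD l r g"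
  unfolding SD_def by (simp add: sum_subtractf)
lemma SD_add: "SD l r (\<lambda>i. f i + g i) = SD l r f + SD l r g"
  unfolding SD_def by (simp add: sum.distrib)
lemma SD_div: "SD l r (\<lambda>i. f i / c) = SD l r f / c"
  unfolding SD_def by (simp add: sum_divide_distrib diff_divide_distrib)
lemma SD_cong: "(\<And>i. i < l + r \<Longrightarrow> f i = g i) \<Longrightarrow> SD l r f = SD l r g"
  unfolding SD_def by (intro arg_cong2[where f="(-)"] sum.cong) auto
lemma SD_Ints: "(\<And>i. i < l + r \<Longrightarrow> f i \<in> \<int>) \<Longrightarrow> SD l r f \<in> \<int>"
  unfolding SD_def by (intro Ints_diff Ints_sum) auto

lemma half_Ints_even: assumes "(of_int w :: rat) / 2 \<in> \<int>" shows "even w"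
proof -
  from assms obtain k where "(of_int w :: rat) / 2 = of_int k" by (auto elim: Ints_cases)
  then have "(of_int w :: rat) = of_int (2 * k)" by simp
  then have "w = 2 * k" by (simp only: of_int_eq_iff)
  then show ?thesis by simp
qed

lemma minus_one_even: "even w \<Longrightarrow> (-1::complex) powi w = 1"
proof -
  assume "even w"
  then obtain k where k: "w = k + k" by (metis evenE mult_2)
  have "(-1::complex) powi (k + k) = (-1) powi k * (-1) powi k" by (rule power_int_add) simp
  then show ?thesis using k by simp
qed



lemma finite_IS: "finite (UNIV :: IS set)"
proof -
  have "x \<in> {H0, Hhalf, Hsix}" for x by (cases x) auto
  then have "UNIV = {H0, Hhalf, Hsix}" by blast
  then show ?thesis by (metis finite.emptyI finite.insertI)
qed

lemma finite_lams: "finite (lams l r)"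
proof -
  have "lams l r = {xs. set xs \<subseteq> UNIV \<and> length xs = l + r}" unfolding lams_def by auto
  then show ?thesis using finite_lists_length_eq[OF finite_IS] by simp
qed


fun sfu :: "IS \<Rightarrow> IS \<Rightarrow> IS" where
  "sfu H0 h = h"
| "sfu Hhalf H0 = Hhalf"
| "sfu Hhalf Hhalf = H0"
| "sfu Hhalf Hsix = Hsix"
| "sfu Hsix h = h"

lemma L0: "m \<noteq> Hsix \<Longrightarrow> fusion m h = {sfu m h}"
  by (cases m; cases h) auto
lemma Linv: "m \<noteq> Hsix \<Longrightarrow> sfu m (sfu m h) = h"
  by (cases m; cases h) auto
lemma L1: "m \<noteq> Hsix \<Longrightarrow> h' \<in> fusion h1 h3 \<Longrightarrow> sfu m h' \<in> fusion h1 (sfu m h3)"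
  by (cases m; cases h'; cases h1; cases h3) auto
lemma L2: "m \<noteq> Hsix \<Longrightarrow> sfu m h' \<in> fusion h1 (sfu m h3) \<Longrightarrow> h' \<in> fusion h1 h3"
  by (cases m; cases h'; cases h1; cases h3) auto
lemma L2b: "m \<noteq> Hsix \<Longrightarrow> h0 \<in> fusion h1 (sfu m h3) \<Longrightarrow> sfu m h0 \<in> fusion h1 h3"
  by (cases m; cases h0; cases h1; cases h3) auto
lemma L1b: "m \<noteq> Hsix \<Longrightarrow> sfu m h0 \<in> fusion h1 h3 \<Longrightarrow> h0 \<in> fusion h1 (sfu m h3)"
  by (cases m; cases h0; cases h1; cases h3) auto
lemma fusion_comm: "fusion a b = fusion b a"
  by (cases a; cases b) auto
lemma fusion_H0R: "fusion h H0 = {h}"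
  by (cases h) auto

definition sm :: "IS list \<Rightarrow> IS list \<Rightarrow> IS list" where
  "sm mu la = map2 sfu mu la"

definition smp :: "IS list \<Rightarrow> bool" where
  "smp mu \<longleftrightarrow> (\<forall>i<length mu. mu ! i \<noteq> Hsix)"

lemma sm_len[simp]: "length (sm mu la) = min (length mu) (length la)"
  unfolding sm_def by simp
lemma sm_nth[simp]: "i < length mu \<Longrightarrow> i < length la \<Longrightarrow> sm mu la ! i = sfu (mu ! i) (la ! i)"
  unfolding sm_def by simp
lemma lams_iff: "la \<in> lams l r \<longleftrightarrow> length la = l + r" unfolding lams_def by simp
lemma sm_lams: "mu \<in> lams l r \<Longrightarrow> la \<in> lams l r \<Longrightarrow> sm mu la \<in> lams l r"
  unfolding lams_iff by simp
lemma sm_inv: "smp mu \<Longrightarrow> length la = length mu \<Longrightarrow> sm mu (sm mu la) = la"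
  by (rule nth_equalityI) (auto simp: smp_def Linv)
lemma lfus_iff: "la \<in> lfus a b \<longleftrightarrow> length la = length a \<and> (\<forall>i<length a. la ! i \<in> fusion (a ! i) (b ! i))"
  unfolding lfus_def by simp
lemma lA_iff: "la \<in> lA a0 a1 a2 a3 \<longleftrightarrow> length la = length a0 \<and>
   (\<forall>i<length a0. la ! i \<in> fusion (a2 ! i) (a3 ! i) \<and> a0 ! i \<in> fusion (a1 ! i) (la ! i))"
  unfolding lA_def A0_def by simp

lemma lfus_sm: assumes "smp mu" "length la = length mu"
  shows "lfus mu la = {sm mu la}"
proof (intro set_eqI iffI)
  fix x assume "x \<in> lfus mu la"
  then show "x \<in> {sm mu la}" using assms
    by (auto simp: lfus_iff smp_def L0 intro!: nth_equalityI)
next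
  fix x assume "x \<in> {sm mu la}"
  then show "x \<in> lfus mu la" using assms by (auto simp: lfus_iff smp_def L0)
qed

locale FAL =
  fixes l r :: nat and sc :: "complex \<Rightarrow> 'v::ab_group_add \<Rightarrow> 'v"
    and G :: "IS list \<Rightarrow> 'v set" and mult :: "'v \<Rightarrow> 'v \<Rightarrow> 'v" and one :: 'v
  assumes FA: "framed_algebra l r sc G mult one"
begin

lemma VS: "vector_space sc" using FA[unfolded framed_algebra_def, THEN conjunct1] .
lemma MO: "module sc" using VS by (simp add: module_iff_vector_space)

sublocale vector_space sc by (rule VS)

lemma homR: "module_hom sc sc (mult a)"
  using FA[unfolded framed_algebra_def, THEN conjunct2, THEN conjunct2, THEN conjunct2, THEN conjunct2, THEN conjunct2, THEN conjunct1] by (simp add: module_hom_iff_linear)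
lemma homL: "module_hom sc sc (\<lambda>x. mult x b)"
  using FA[unfolded framed_algebra_def, THEN conjunct2, THEN conjunct2, THEN conjunct2, THEN conjunct2, THEN conjunct2, THEN conjunct2, THEN conjunct1] by (simp add: module_hom_iff_linear)

lemma subG: "module.subspace sc (G la)" using FA[unfolded framed_algebra_def, THEN conjunct2, THEN conjunct2, THEN conjunct1] by blast
lemma Gout: "la \<notin> lams l r \<Longrightarrow> G la = {0}" using FA[unfolded framed_algebra_def, THEN conjunct2, THEN conjunct2, THEN conjunct2, THEN conjunct1] by blast
lemma ex1: "\<exists>!x. graded_decomp l r G v x" using FA[unfolded framed_algebra_def, THEN conjunct2, THEN conjunct2, THEN conjunct2, THEN conjunct2, THEN conjunct1] by blast
lemma one_ne: "one \<noteq> 0" using FA[unfolded framed_algebra_def, THEN conjunct2, THEN conjunct2, THEN conjunct2, THEN conjunct2, THEN conjunct2, THEN conjunct2, THEN conjunct2, THEN conjunct1] .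
lemma unit: "mult one a = a" "mult a one = a" using FA[unfolded framed_algebra_def, THEN conjunct2, THEN conjunct2, THEN conjunct2, THEN conjunct2, THEN conjunct2, THEN conjunct2, THEN conjunct2, THEN conjunct2, THEN conjunct2, THEN conjunct2, THEN conjunct2, THEN conjunct1, rule_format] by simp_all
lemma one_in: "one \<in> G (lzero l r)" using FA[unfolded framed_algebra_def, THEN conjunct2, THEN conjunct2, THEN conjunct2, THEN conjunct2, THEN conjunct2, THEN conjunct2, THEN conjunct2, THEN conjunct2, THEN conjunct1] .
lemma FA1: "la \<in> lams l r \<Longrightarrow> G la \<noteq> {0} \<Longrightarrow> sdim l r la \<in> \<int>"
  by (rule FA[unfolded framed_algebra_def, THEN conjunct2, THEN conjunct2, THEN conjunct2, THEN conjunct2, THEN conjunct2, THEN conjunct2, THEN conjunct2, THEN conjunct2, THEN conjunct2, THEN conjunct1, rule_format])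
lemma FA3: "la1 \<in> lams l r \<Longrightarrow> la2 \<in> lams l r \<Longrightarrow> a \<in> G la1 \<Longrightarrow> b \<in> G la2 \<Longrightarrow>
        mult a b \<in> module.span sc (\<Union>la\<in>lfus la1 la2. G la)"
  by (rule FA[unfolded framed_algebra_def, THEN conjunct2, THEN conjunct2, THEN conjunct2, THEN conjunct2, THEN conjunct2, THEN conjunct2, THEN conjunct2, THEN conjunct2, THEN conjunct2, THEN conjunct2, THEN conjunct2, THEN conjunct2, THEN conjunct1, rule_format])
lemma FA4: "la0 \<in> lams l r \<Longrightarrow> la1 \<in> lams l r \<Longrightarrow> la2 \<in> lams l r \<Longrightarrow> la3 \<in> lams l r \<Longrightarrow>
        a1\<in>G la1 \<Longrightarrow> a2\<in>G la2 \<Longrightarrow> a3\<in>G la3 \<Longrightarrow> la' \<in> lA la0 la2 la1 la3 \<Longrightarrow>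
          comp l r G la0 (mult a2 (comp l r G la' (mult a1 a3))) =
          (\<Sum>la\<in>lA la0 la1 la2 la3. sc (lB l r la la' la0 la1 la2 la3)
               (comp l r G la0 (mult a1 (comp l r G la (mult a2 a3)))))"
  by (rule FA[unfolded framed_algebra_def, THEN conjunct2, THEN conjunct2, THEN conjunct2, THEN conjunct2, THEN conjunct2, THEN conjunct2, THEN conjunct2, THEN conjunct2, THEN conjunct2, THEN conjunct2, THEN conjunct2, THEN conjunct2, THEN conjunct2, rule_format])

lemma mult_0R: "mult a 0 = 0" using module_hom.zero[OF homR] .
lemma mult_0L: "mult 0 b = 0" using module_hom.zero[OF homL] .
lemma mult_scR: "mult a (sc c x) = sc c (mult a x)" using module_hom.scale[OF homR] .
lemma mult_scL: "mult (sc c x) b = sc c (mult x b)" using module_hom.scale[OF homL] .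
lemma mult_sumR: "mult a (sum f A) = (\<Sum>x\<in>A. mult a (f x))" using module_hom.sum[OF homR] .
lemma mult_sumL: "mult (sum f A) b = (\<Sum>x\<in>A. mult (f x) b)" using module_hom.sum[OF homL] .

lemma sc0: "sc c 0 = 0" using module.scale_zero_right[OF MO] .
lemma G0: "0 \<in> G la" using module.subspace_0[OF MO subG] .

definition dec where "dec v = (THE x. graded_decomp l r G v x)"

lemma dec_ok: "graded_decomp l r G v (dec v)"
  unfolding dec_def using theI'[OF ex1] .
lemma dec_uniq: "graded_decomp l r G v x \<Longrightarrow> dec v = x"
  using dec_ok ex1 by blast
lemma comp_dec: "comp l r G la v = dec v la" unfolding comp_def dec_def ..

lemma comp_in: "comp l r G la v \<in> G la"
  using dec_ok[of v] G0 unfolding comp_dec graded_decomp_def by (cases "la \<in> lams l r") auto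
lemma comp_out: "la \<notin> lams l r \<Longrightarrow> comp l r G la v = 0"
  using dec_ok[of v] unfolding comp_dec graded_decomp_def by auto
lemma comp_sum: "v = (\<Sum>la\<in>lams l r. comp l r G la v)"
  using dec_ok[of v] unfolding comp_dec graded_decomp_def by auto

lemma comp_add: "comp l r G la (u + w) = comp l r G la u + comp l r G la w"
proof -
  have "graded_decomp l r G (u + w) (\<lambda>k. dec u k + dec w k)"
    using dec_ok[of u] dec_ok[of w] module.subspace_add[OF MO subG]
    unfolding graded_decomp_def by (auto simp: sum.distrib)
  then show ?thesis unfolding comp_dec using dec_uniq by metis
qed

lemma comp_scale: "comp l r G la (sc c u) = sc c (comp l r G la u)"
proof -
  have "graded_decomp l r G (sc c u) (\<lambda>k. sc c (dec u k))"
    using dec_ok[of u] module.subspace_scale[OF MO subG] sc0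
    unfolding graded_decomp_def by (auto simp: scale_sum_right[symmetric])
  then show ?thesis unfolding comp_dec using dec_uniq by metis
qed

lemma homC: "module_hom sc sc (comp l r G la)"
  using MO comp_add comp_scale by (simp add: module_hom_def module_hom_axioms_def)

lemma comp_0: "comp l r G la 0 = 0" using module_hom.zero[OF homC] .

lemma comp_hom: assumes "v \<in> G la" shows "comp l r G la' v = (if la' = la then v else 0)"
proof -
  have "graded_decomp l r G v (\<lambda>k. if k = la then v else 0)"
  proof (cases "la \<in> lams l r")
    case True
    have s: "(\<Sum>k\<in>lams l r. if k = la then v else 0) = v"
      using True finite_lams by (simp add: sum.delta)
    show ?thesis unfolding graded_decomp_def
    proof (intro conjI ballI allI impI)
      show "v = (\<Sum>k\<in>lams l r. if k = la then v else 0)" using s by simp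
    next
      fix k assume "k \<in> lams l r" then show "(if k = la then v else 0) \<in> G k"
        using assms G0[of k] by (cases "k = la") simp_all
    next
      fix k assume "k \<notin> lams l r" then show "(if k = la then v else 0) = 0"
        using True by (cases "k = la") simp_all
    qed
  next
    case False
    then have "v = 0" using assms Gout[of la] by blast
    then show ?thesis using G0 unfolding graded_decomp_def by (simp add: sum.neutral)
  qed
  from dec_uniq[OF this] show ?thesis unfolding comp_dec by simp
qed

lemma comp_span: assumes "v \<in> module.span sc (\<Union>k\<in>K. G k)" "la \<notin> K"
  shows "comp l r G la v = 0"
proof -
  have h: "comp l r G la x = 0" if "x \<in> (\<Union>k\<in>K. G k)" for x
  proof -
    from that obtain k where k: "k \<in> K" "x \<in> G k" by blast
    then have "la \<noteq> k" using assms(2) by blast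
    then show ?thesis using comp_hom[OF k(2), of la] by simp
  qed
  show ?thesis by (rule module_hom.eq_0_on_span[OF homC h assms(1)])
qed


lemma MS: assumes "mu \<in> lams l r" "smp mu" "a \<in> G mu" "la \<in> lams l r" "x \<in> G la"
  shows "mult a x \<in> G (sm mu la)"
proof -
  have "lfus mu la = {sm mu la}" using assms by (intro lfus_sm) (auto simp: lams_iff)
  then have "mult a x \<in> span (G (sm mu la))" using FA3[OF assms(1,4,3,5)] by simp
  moreover have "span (G (sm mu la)) = G (sm mu la)" using subG[of "sm mu la"] by simp
  ultimately show ?thesis by simp
qed

lemma comp_sm: assumes "mu \<in> lams l r" "smp mu" "a \<in> G mu" "la \<in> lams l r" "x \<in> G la"
  shows "comp l r G (sm mu la) (mult a x) = mult a x"
  using comp_hom[OF MS[OF assms]] by simp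

lemma C1: assumes mu: "mu \<in> lams l r" "smp mu" "a \<in> G mu"
  and x1: "la1 \<in> lams l r" "x1 \<in> G la1" and x3: "la3 \<in> lams l r" "x3 \<in> G la3"
  and lp: "lp \<in> lams l r"
  shows "mult a (comp l r G lp (mult x1 x3)) =
     sc (lB l r (sm mu la3) lp (sm mu lp) la1 mu la3) (comp l r G (sm mu lp) (mult x1 (mult a x3)))"
proof (cases "lp \<in> lfus la1 la3")
  case True
  have len: "length mu = l + r" "length la1 = l + r" "length la3 = l + r" "length lp = l + r"
    using mu x1 x3 lp by (auto simp: lams_iff)
  have m: "\<And>i. i < l + r \<Longrightarrow> mu ! i \<noteq> Hsix" using mu len by (auto simp: smp_def)
  have A: "lp \<in> lA (sm mu lp) mu la1 la3"
    using True len m by (auto simp: lA_iff lfus_iff L0)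
  have Bs: "lA (sm mu lp) la1 mu la3 = {sm mu la3}"
  proof (intro set_eqI iffI)
    fix x assume "x \<in> lA (sm mu lp) la1 mu la3"
    then show "x \<in> {sm mu la3}" using len m by (auto simp: lA_iff L0 intro!: nth_equalityI)
  next
    fix x assume "x \<in> {sm mu la3}"
    then show "x \<in> lA (sm mu lp) la1 mu la3" using len m True
      by (auto simp: lA_iff L0 lfus_iff intro: L1)
  qed
  have "comp l r G (sm mu lp) (mult a (comp l r G lp (mult x1 x3))) =
     (\<Sum>la\<in>lA (sm mu lp) la1 mu la3. sc (lB l r la lp (sm mu lp) la1 mu la3)
        (comp l r G (sm mu lp) (mult x1 (comp l r G la (mult a x3)))))"
    by (rule FA4[OF sm_lams[OF mu(1) lp] x1(1) mu(1) x3(1) x1(2) mu(3) x3(2) A])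
  also have "\<dots> = sc (lB l r (sm mu la3) lp (sm mu lp) la1 mu la3)
        (comp l r G (sm mu lp) (mult x1 (mult a x3)))"
    using Bs comp_sm[OF mu x3] by simp
  finally show ?thesis using comp_sm[OF mu lp comp_in] by simp
next
  case False
  have len: "length mu = l + r" "length la1 = l + r" "length la3 = l + r" "length lp = l + r"
    using mu x1 x3 lp by (auto simp: lams_iff)
  have m: "\<And>i. i < l + r \<Longrightarrow> mu ! i \<noteq> Hsix" using mu len by (auto simp: smp_def)
  have "comp l r G lp (mult x1 x3) = 0" using comp_span[OF FA3[OF x1(1) x3(1) x1(2) x3(2)] False] .
  moreover have "sm mu lp \<notin> lfus la1 (sm mu la3)"
  proof
    assume "sm mu lp \<in> lfus la1 (sm mu la3)"
    then have "lp \<in> lfus la1 la3" using len m by (auto simp: lfus_iff intro: L2)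
    then show False using False by simp
  qed
  then have "comp l r G (sm mu lp) (mult x1 (mult a x3)) = 0"
    using comp_span[OF FA3[OF x1(1) sm_lams[OF mu(1) x3(1)] x1(2) MS[OF mu x3]]] by blast
  ultimately show ?thesis by (simp add: mult_0R)
qed

lemma C2: assumes mu: "mu \<in> lams l r" "smp mu" "a \<in> G mu"
  and x1: "la1 \<in> lams l r" "x1 \<in> G la1" and x3: "la3 \<in> lams l r" "x3 \<in> G la3"
  and l0: "l0 \<in> lams l r"
  shows "comp l r G l0 (mult x1 (mult a x3)) =
     sc (lB l r (sm mu l0) (sm mu la3) l0 mu la1 la3) (mult a (comp l r G (sm mu l0) (mult x1 x3)))"
proof -
  have len: "length mu = l + r" "length la1 = l + r" "length la3 = l + r" "length l0 = l + r"
    using mu x1 x3 l0 by (auto simp: lams_iff)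
  have m: "\<And>i. i < l + r \<Longrightarrow> mu ! i \<noteq> Hsix" using mu len by (auto simp: smp_def)
  have inv: "sm mu (sm mu l0) = l0" using sm_inv[OF mu(2)] len by simp
  show ?thesis
  proof (cases "l0 \<in> lfus la1 (sm mu la3)")
    case True
    have A: "sm mu la3 \<in> lA l0 la1 mu la3"
      using True len m by (auto simp: lA_iff lfus_iff L0)
    have Bs: "lA l0 mu la1 la3 = {sm mu l0}"
    proof (intro set_eqI iffI)
      fix x assume "x \<in> lA l0 mu la1 la3"
      then show "x \<in> {sm mu l0}" using len m by (auto simp: lA_iff L0 Linv intro!: nth_equalityI)
    next
      fix x assume "x \<in> {sm mu l0}"
      then show "x \<in> lA l0 mu la1 la3" using len m True
        by (auto simp: lA_iff L0 lfus_iff Linv intro: L2b)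
    qed
    have "comp l r G l0 (mult x1 (comp l r G (sm mu la3) (mult a x3))) =
       (\<Sum>la\<in>lA l0 mu la1 la3. sc (lB l r la (sm mu la3) l0 mu la1 la3)
          (comp l r G l0 (mult a (comp l r G la (mult x1 x3)))))"
      by (rule FA4[OF l0 mu(1) x1(1) x3(1) mu(3) x1(2) x3(2) A])
    also have "\<dots> = sc (lB l r (sm mu l0) (sm mu la3) l0 mu la1 la3)
          (mult a (comp l r G (sm mu l0) (mult x1 x3)))"
      using Bs comp_sm[OF mu sm_lams[OF mu(1) l0] comp_in] inv by simp
    finally show ?thesis using comp_sm[OF mu x3] by simp
  next
    case False
    have "comp l r G l0 (mult x1 (mult a x3)) = 0"
      using comp_span[OF FA3[OF x1(1) sm_lams[OF mu(1) x3(1)] x1(2) MS[OF mu x3]] False] .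
    moreover have "sm mu l0 \<notin> lfus la1 la3"
    proof
      assume "sm mu l0 \<in> lfus la1 la3"
      then have "l0 \<in> lfus la1 (sm mu la3)" using len m
        by (auto simp: lfus_iff intro: L1b)
      then show False using False by simp
    qed
    then have "comp l r G (sm mu l0) (mult x1 x3) = 0"
      using comp_span[OF FA3[OF x1(1) x3(1) x1(2) x3(2)]] by blast
    ultimately show ?thesis by (simp add: mult_0R)
  qed
qed

lemma lzero_lams: "lzero l r \<in> lams l r" unfolding lzero_def lams_iff by simp

lemma C3: assumes X: "X \<in> lams l r" "x \<in> G X" and Y: "Y \<in> lams l r" "y \<in> G Y"
  and l0: "l0 \<in> lams l r"
  shows "comp l r G l0 (mult y x) = sc (lB l r Y X l0 X Y (lzero l r)) (comp l r G l0 (mult x y))"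
proof -
  have len: "length X = l + r" "length Y = l + r" "length l0 = l + r" "length (lzero l r) = l + r"
    using X Y l0 by (auto simp: lams_iff lzero_def)
  have z: "\<And>i. i < l + r \<Longrightarrow> lzero l r ! i = H0" by (simp add: lzero_def)
  show ?thesis
  proof (cases "l0 \<in> lfus X Y")
    case True
    have A: "X \<in> lA l0 Y X (lzero l r)"
      using True len z by (auto simp: lA_iff lfus_iff fusion_H0R fusion_comm)
    have Bs: "lA l0 X Y (lzero l r) = {Y}"
    proof (intro set_eqI iffI)
      fix x assume "x \<in> lA l0 X Y (lzero l r)"
      then show "x \<in> {Y}" using len z by (auto simp: lA_iff fusion_H0R intro!: nth_equalityI)
    next
      fix x assume "x \<in> {Y}"
      then show "x \<in> lA l0 X Y (lzero l r)" using len z True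
        by (auto simp: lA_iff lfus_iff fusion_H0R)
    qed
    have "comp l r G l0 (mult y (comp l r G X (mult x one))) =
       (\<Sum>la\<in>lA l0 X Y (lzero l r). sc (lB l r la X l0 X Y (lzero l r))
          (comp l r G l0 (mult x (comp l r G la (mult y one)))))"
      by (rule FA4[OF l0 X(1) Y(1) lzero_lams X(2) Y(2) one_in A])
    then show ?thesis using Bs comp_hom[OF X(2)] comp_hom[OF Y(2)] by (simp add: unit)
  next
    case False
    have F2: "l0 \<notin> lfus Y X" using False len by (auto simp: lfus_iff fusion_comm)
    show ?thesis using comp_span[OF FA3[OF X(1) Y(1) X(2) Y(2)] False]
      comp_span[OF FA3[OF Y(1) X(1) Y(2) X(2)] F2] by simp
  qed
qed

lemma C5: assumes mu: "mu \<in> lams l r" "smp mu" "a \<in> G mu" and la: "la \<in> lams l r"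
  shows "comp l r G (sm mu la) (mult a m) = mult a (comp l r G la m)"
proof -
  have e: "mult a m = (\<Sum>k\<in>lams l r. mult a (comp l r G k m))"
    using arg_cong[OF comp_sum[of m], of "mult a"] by (simp add: mult_sumR)
  have "comp l r G (sm mu la) (mult a m) = (\<Sum>k\<in>lams l r. comp l r G (sm mu la) (mult a (comp l r G k m)))"
    unfolding e by (rule module_hom.sum[OF homC])
  also have "\<dots> = (\<Sum>k\<in>lams l r. if k = la then mult a (comp l r G k m) else 0)"
  proof (rule sum.cong[OF refl])
    fix k assume k: "k \<in> lams l r"
    have iff: "sm mu la = sm mu k \<longleftrightarrow> la = k"
      using sm_inv[OF mu(2), of la] sm_inv[OF mu(2), of k] k la mu(1) unfolding lams_iff by metis
    have "comp l r G (sm mu la) (mult a (comp l r G k m)) = (if sm mu la = sm mu k then mult a (comp l r G k m) else 0)"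
      by (rule comp_hom[OF MS[OF mu k comp_in]])
    then show "comp l r G (sm mu la) (mult a (comp l r G k m)) = (if k = la then mult a (comp l r G k m) else 0)"
      unfolding iff by (simp add: eq_commute)
  qed
  also have "\<dots> = mult a (comp l r G la m)" using la finite_lams by (simp add: sum.delta')
  finally show ?thesis .
qed


lemma mult_expand: "mult s m = (\<Sum>j\<in>lams l r. \<Sum>k\<in>lams l r. mult (comp l r G j s) (comp l r G k m))"
proof -
  have "mult s m = mult (\<Sum>j\<in>lams l r. comp l r G j s) (\<Sum>k\<in>lams l r. comp l r G k m)"
    using arg_cong2[OF comp_sum[of s] comp_sum[of m], of mult] .
  also have "\<dots> = (\<Sum>j\<in>lams l r. \<Sum>k\<in>lams l r. mult (comp l r G j s) (comp l r G k m))"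
    by (simp add: mult_sumL mult_sumR) (rule sum.swap)
  finally show ?thesis .
qed

lemma C4: assumes simple: "\<forall>M. fa_ideal l r sc G mult M \<longrightarrow> M = {0} \<or> M = UNIV"
  and mu: "mu \<in> lams l r" "smp mu" "a \<in> G mu" and a0: "a \<noteq> 0"
  and ax: "mult a x = 0"
  shows "x = 0"
proof -
  define M where "M = {x. mult a x = 0}"
  have c0: "mult a (comp l r G k y) = 0" if "y \<in> M" "k \<in> lams l r" for y k
  proof -
    have "mult a (comp l r G k y) = comp l r G (sm mu k) (mult a y)" using C5[OF mu that(2)] by simp
    also have "\<dots> = 0" using that(1) comp_0 unfolding M_def by simp
    finally show ?thesis .
  qed
  have sub: "subspace M" unfolding M_def by (rule module_hom.subspace_kernel[OF homR])
  have gr: "M = span (\<Union>la\<in>lams l r. M \<inter> G la)"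
  proof (rule subset_antisym)
    show "M \<subseteq> span (\<Union>la\<in>lams l r. M \<inter> G la)"
    proof
      fix y assume y: "y \<in> M"
      have "(\<Sum>k\<in>lams l r. comp l r G k y) \<in> span (\<Union>la\<in>lams l r. M \<inter> G la)"
      proof (rule span_sum)
        fix k assume k: "k \<in> lams l r"
        have "comp l r G k y \<in> M \<inter> G k" using c0[OF y k] comp_in unfolding M_def by simp
        then show "comp l r G k y \<in> span (\<Union>la\<in>lams l r. M \<inter> G la)" using k by (intro span_base) blast
      qed
      then show "y \<in> span (\<Union>la\<in>lams l r. M \<inter> G la)" using comp_sum[of y] by simp
    qed
    show "span (\<Union>la\<in>lams l r. M \<inter> G la) \<subseteq> M" by (rule span_minimal) (use sub in auto)
  qed
  have cl: "mult s y \<in> M" if y: "y \<in> M" for s y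
  proof -
    have t: "mult a (mult (comp l r G j s) (comp l r G k y)) = 0" if j: "j \<in> lams l r" and k: "k \<in> lams l r" for j k
    proof -
      let ?s = "comp l r G j s" and ?m = "comp l r G k y"
      have "mult a (mult ?s ?m) = mult a (\<Sum>lp\<in>lams l r. comp l r G lp (mult ?s ?m))"
        using comp_sum[of "mult ?s ?m"] by (metis)
      also have "\<dots> = (\<Sum>lp\<in>lams l r. mult a (comp l r G lp (mult ?s ?m)))" by (rule mult_sumR)
      also have "\<dots> = 0"
      proof (rule sum.neutral, rule ballI)
        fix lp assume lp: "lp \<in> lams l r"
        show "mult a (comp l r G lp (mult ?s ?m)) = 0"
          using C1[OF mu j comp_in k comp_in lp] c0[OF y k] by (simp add: mult_0R comp_0)
      qed
      finally show ?thesis .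
    qed
    have "mult a (mult s y) = (\<Sum>j\<in>lams l r. \<Sum>k\<in>lams l r. mult a (mult (comp l r G j s) (comp l r G k y)))"
      by (subst mult_expand) (simp add: mult_sumR)
    also have "\<dots> = 0" using t by simp
    finally show ?thesis unfolding M_def by simp
  qed
  have "fa_ideal l r sc G mult M" unfolding fa_ideal_def using sub gr cl by blast
  then have "M = {0} \<or> M = UNIV" using simple by blast
  moreover have "M \<noteq> UNIV"
  proof
    assume "M = UNIV"
    then have "mult a one = 0" unfolding M_def by blast
    then show False using a0 unit by simp
  qed
  ultimately have "M = {0}" by blast
  then show ?thesis using ax unfolding M_def by blast
qed

end


lemma LF1: assumes "\<not>(d1 \<and> c1)" "\<not>(d2 \<and> c2)" "g \<longrightarrow> d1 \<and> d2"
  shows "Bc (sfu (toIS1 False al) (toIS1 d2 c2))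
             (toIS1 (d1 \<noteq> d2) ((\<not>(d1 \<noteq> d2) \<and> (c1 \<noteq> c2)) \<noteq> g))
             (sfu (toIS1 False al) (toIS1 (d1 \<noteq> d2) ((\<not>(d1 \<noteq> d2) \<and> (c1 \<noteq> c2)) \<noteq> g)))
             (toIS1 d1 c1) (toIS1 False al) (toIS1 d2 c2)
   = (if d1 \<and> al then \<i> else 1) *
     ((if al \<and> c1 then -1 else 1) * (if (d1 \<and> d2) \<and> al then -1 else 1) *
      (if g \<and> al then -1 else 1) * (if (d1 \<and> al) \<and> c2 then -1 else 1)) *
     (if d1 \<and> al then -1 else 1)"
  using assms by (cases d1; cases c1; cases d2; cases c2; cases g; cases al) (simp_all add: Bc_def toIS1_def)

lemma LF2: assumes "\<not>(d1 \<and> c1)" "\<not>(d2 \<and> c2)" "nu \<in> fusion (toIS1 d1 c1) (toIS1 d2 c2)"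
  shows "Bc nu (sfu (toIS1 False al) (toIS1 d1 c1)) (sfu (toIS1 False al) nu) (toIS1 False al) (toIS1 d2 c2) (toIS1 d1 c1)
       * Bc (toIS1 d2 c2) (toIS1 d1 c1) nu (toIS1 d1 c1) (toIS1 d2 c2) H0
     = (if (d1 \<and> al) \<and> c2 then -1 else 1) *
       Bc (toIS1 d2 c2) (sfu (toIS1 False al) (toIS1 d1 c1)) (sfu (toIS1 False al) nu)
          (sfu (toIS1 False al) (toIS1 d1 c1)) (toIS1 d2 c2) H0"
  using assms by (cases d1; cases c1; cases d2; cases c2; cases al; cases nu) (simp_all add: Bc_def toIS1_def ac_simps)

lemma L3: "m \<noteq> Hsix \<Longrightarrow> sfu m n \<in> fusion (sfu m h1) h2 \<Longrightarrow> n \<in> fusion h1 h2"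
  by (cases m; cases n; cases h1; cases h2) auto

lemma ii_nz: "1 + \<i> \<noteq> 0" "1 - \<i> \<noteq> 0" by (simp_all add: complex_eq_iff)

lemma Bc_nz: "Bc h h' h0 h1 h2 h3 \<noteq> 0"
  by (simp add: Bc_def ii_nz)

lemma PF_nz: "(\<And>i. i < l + r \<Longrightarrow> f i \<noteq> 0) \<Longrightarrow> PF l r f \<noteq> 0"
  unfolding PF_def by (auto simp: prod_zero_iff)

lemma LS: assumes "\<not>(d1 \<and> c1)"
  shows "hval (sfu (toIS1 False al) (toIS1 d1 c1)) - hval (toIS1 d1 c1) - (if \<not> d1 \<and> al then 1 else 0) / 2 \<in> \<int>"
    and "hval (sfu (toIS1 False al) (toIS1 d1 c1)) - hval (toIS1 d1 c1) + hval (toIS1 False al) - (if d1 \<and> al then 1 else 0) / 2 \<in> \<int>"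
  using assms by (cases d1; cases c1; cases al; simp add: toIS1_def)+



lemma LF0: "sfu (toIS1 False al) (toIS1 dd ((\<not> dd \<and> c) \<noteq> g)) = toIS1 dd ((\<not> dd \<and> (c \<noteq> al)) \<noteq> g)"
  by (cases dd; cases c; cases g; cases al) (simp_all add: toIS1_def)

lemma PF_pow': assumes "z \<noteq> 0" "cnj z = inverse z" "length x = l + r"
  "\<And>i. i < l + r \<Longrightarrow> f i = (if x ! i then z else 1)"
  shows "PF l r f = z powi wt l x"
  using PF_powi[OF assms(1-3)] PF_cong[of l r f, OF assms(4)] by simp

lemma valid_nth: "valid_dc l r d c \<Longrightarrow> i < l + r \<Longrightarrow> \<not> (d ! i \<and> c ! i)"
  unfolding valid_dc_def using andL_nth[of i d c]
  by (metis nth_replicate)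

theorem mainTheorem11:
  fixes l r :: nat
    and sc :: "complex \<Rightarrow> 'v::ab_group_add \<Rightarrow> 'v"
    and G :: "IS list \<Rightarrow> 'v set"
    and mult :: "'v \<Rightarrow> 'v \<Rightarrow> 'v"
    and one :: 'v
    and \<alpha> d1 c1 d2 c2 :: "bool list"
    and a v1 v2 :: 'v
  assumes "simple_framed_algebra l r sc G mult one"
    and "\<alpha> \<in> C_S l r G"
    and "(d1, c1) \<in> I_S l r G"
    and "(d2, c2) \<in> I_S l r G"
    and "a \<in> Sdc G (replicate (l + r) False) \<alpha>"
    and "v1 \<in> Sdc G d1 c1"
    and "v2 \<in> Sdc G d2 c2"
  shows "(\<forall>\<gamma>\<in>Z2sub (andL d1 d2).
            mult a (comp l r G
               (toIS (xorL d1 d2) (xorL (andL (perpL (xorL d1 d2)) (xorL c1 c2)) \<gamma>))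
               (mult v1 v2))
          = sc (\<i> powi (wt l (andL d1 \<alpha>))
                * (-1) powi (wt l (andL \<alpha> c1) + wt l (andL (andL d1 d2) \<alpha>)
                             + wt l (andL \<gamma> \<alpha>) + wt l (andL (andL d1 \<alpha>) c2)))
              (comp l r G
                 (toIS (xorL d1 d2) (xorL (andL (perpL (xorL d1 d2)) (xorL (xorL c1 c2) \<alpha>)) \<gamma>))
                 (mult v1 (mult a v2))))
       \<and> mult a (mult v1 v2)
          = sc ((-1) powi (wt l (andL (perpL d1) \<alpha>) + wt l (andL (andL d1 \<alpha>) c2)))
              (mult (mult a v1) v2)"
proof -
  interpret FAL l r sc G mult one
    using assms(1) unfolding simple_framed_algebra_def FAL_def by blast
  have simple: "\<forall>M. fa_ideal l r sc G mult M \<longrightarrow> M = {0} \<or> M = UNIV"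
    using assms(1) unfolding simple_framed_algebra_def by blast
  define z where "z = replicate (l + r) False"
  define mu where "mu = toIS z \<alpha>"
  define la1 where "la1 = toIS d1 c1"
  define la2 where "la2 = toIS d2 c2"
  have vz: "valid_dc l r z \<alpha>" and Gmu: "G mu \<noteq> {0}"
    using assms(2) unfolding C_S_def z_def mu_def Sdc_def by auto
  have v1d: "valid_dc l r d1 c1" and Gla1: "G la1 \<noteq> {0}"
    using assms(3) unfolding I_S_def la1_def Sdc_def by auto
  have v2d: "valid_dc l r d2 c2" and Gla2: "G la2 \<noteq> {0}"
    using assms(4) unfolding I_S_def la2_def Sdc_def by auto
  have lens: "length \<alpha> = l + r" "length d1 = l + r" "length c1 = l + r" "length d2 = l + r"
    "length c2 = l + r" "length z = l + r"
    using vz v1d v2d unfolding valid_dc_def z_def by auto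
  have dc1: "\<And>i. i < l + r \<Longrightarrow> \<not> (d1 ! i \<and> c1 ! i)" using valid_nth[OF v1d] .
  have dc2: "\<And>i. i < l + r \<Longrightarrow> \<not> (d2 ! i \<and> c2 ! i)" using valid_nth[OF v2d] .
  have mu_nth: "\<And>i. i < l + r \<Longrightarrow> mu ! i = toIS1 False (\<alpha> ! i)"
    unfolding mu_def z_def using lens by simp
  have la1_nth: "\<And>i. i < l + r \<Longrightarrow> la1 ! i = toIS1 (d1 ! i) (c1 ! i)"
    unfolding la1_def using lens by simp
  have la2_nth: "\<And>i. i < l + r \<Longrightarrow> la2 ! i = toIS1 (d2 ! i) (c2 ! i)"
    unfolding la2_def using lens by simp
  have mu_l: "mu \<in> lams l r" and la1_l: "la1 \<in> lams l r" and la2_l: "la2 \<in> lams l r"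
    unfolding mu_def la1_def la2_def lams_iff using lens by simp_all
  have smp: "smp mu" unfolding smp_def using mu_nth mu_l by (auto simp: lams_iff toIS1_def)
  have aG: "a \<in> G mu" using assms(5) unfolding mu_def z_def Sdc_def by simp
  have v1G: "v1 \<in> G la1" using assms(6) unfolding la1_def Sdc_def by simp
  have v2G: "v2 \<in> G la2" using assms(7) unfolding la2_def Sdc_def by simp
  note muS = mu_l smp aG
  show ?thesis
  proof (cases "a = 0 \<or> v1 = 0")
    case True
    then show ?thesis by (auto simp: mult_0L mult_0R comp_0 sc0)
  next
    case False
    then have a0: "a \<noteq> 0" and v10: "v1 \<noteq> 0" by auto
    define rho where "rho = sm mu la1"
    have rho_l: "rho \<in> lams l r" unfolding rho_def using sm_lams[OF mu_l la1_l] .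
    have rho_nth: "\<And>i. i < l + r \<Longrightarrow> rho ! i = sfu (toIS1 False (\<alpha> ! i)) (toIS1 (d1 ! i) (c1 ! i))"
      unfolding rho_def using mu_l la1_l mu_nth la1_nth by (simp add: lams_iff)
    have av1G: "mult a v1 \<in> G rho" unfolding rho_def by (rule MS[OF muS la1_l v1G])
    have av1: "mult a v1 \<noteq> 0" using C4[OF simple muS a0] v10 by blast
    have Grho: "G rho \<noteq> {0}" using av1G av1 by blast
    have I_rho: "sdim l r rho \<in> \<int>" using FA1[OF rho_l Grho] .
    have I_la1: "sdim l r la1 \<in> \<int>" using FA1[OF la1_l Gla1] .
    have I_mu: "sdim l r mu \<in> \<int>" using FA1[OF mu_l Gmu] .
    have E1: "even (wt l (andL (perpL d1) \<alpha>))"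
    proof (rule half_Ints_even)
      let ?X = "andL (perpL d1) \<alpha>"
      have lx: "length ?X = l + r" using lens by simp
      have "SD l r (\<lambda>i. hval (rho ! i) - hval (la1 ! i) - (if ?X ! i then 1 else 0) / 2)
          = sdim l r rho - sdim l r la1 - of_int (wt l ?X) / 2"
        by (simp only: SD_diff SD_div sdim_SD wt_SD[OF lx])
      moreover have "SD l r (\<lambda>i. hval (rho ! i) - hval (la1 ! i) - (if ?X ! i then 1 else 0) / 2) \<in> \<int>"
      proof (rule SD_Ints)
        fix i assume i: "i < l + r"
        show "hval (rho ! i) - hval (la1 ! i) - (if ?X ! i then 1 else 0) / 2 \<in> \<int>"
          using LS(1)[OF dc1[OF i], of "\<alpha> ! i"] i rho_nth[OF i] la1_nth[OF i] lens by simp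
      qed
      ultimately have "sdim l r rho - sdim l r la1 - of_int (wt l ?X) / 2 \<in> \<int>" by simp
      then have "sdim l r rho - sdim l r la1 - (sdim l r rho - sdim l r la1 - of_int (wt l ?X) / 2) \<in> \<int>"
        using I_rho I_la1 by (intro Ints_diff) auto
      then show "(of_int (wt l ?X) :: rat) / 2 \<in> \<int>" by simp
    qed
    have E2: "even (wt l (andL d1 \<alpha>))"
    proof (rule half_Ints_even)
      let ?X = "andL d1 \<alpha>"
      have lx: "length ?X = l + r" using lens by simp
      have "SD l r (\<lambda>i. hval (rho ! i) - hval (la1 ! i) + hval (mu ! i) - (if ?X ! i then 1 else 0) / 2)
          = sdim l r rho - sdim l r la1 + sdim l r mu - of_int (wt l ?X) / 2"
        by (simp only: SD_diff SD_add SD_div sdim_SD wt_SD[OF lx])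
      moreover have "SD l r (\<lambda>i. hval (rho ! i) - hval (la1 ! i) + hval (mu ! i) - (if ?X ! i then 1 else 0) / 2) \<in> \<int>"
      proof (rule SD_Ints)
        fix i assume i: "i < l + r"
        show "hval (rho ! i) - hval (la1 ! i) + hval (mu ! i) - (if ?X ! i then 1 else 0) / 2 \<in> \<int>"
          using LS(2)[OF dc1[OF i], of "\<alpha> ! i"] i rho_nth[OF i] la1_nth[OF i] mu_nth[OF i] lens by simp
      qed
      ultimately have "sdim l r rho - sdim l r la1 + sdim l r mu - of_int (wt l ?X) / 2 \<in> \<int>" by simp
      then have "sdim l r rho - sdim l r la1 + sdim l r mu - (sdim l r rho - sdim l r la1 + sdim l r mu - of_int (wt l ?X) / 2) \<in> \<int>"
        using I_rho I_la1 I_mu by (intro Ints_diff Ints_add) auto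
      then show "(of_int (wt l ?X) :: rat) / 2 \<in> \<int>" by simp
    qed
    have part1: "mult a (comp l r G
               (toIS (xorL d1 d2) (xorL (andL (perpL (xorL d1 d2)) (xorL c1 c2)) \<gamma>))
               (mult v1 v2))
          = sc (\<i> powi (wt l (andL d1 \<alpha>))
                * (-1) powi (wt l (andL \<alpha> c1) + wt l (andL (andL d1 d2) \<alpha>)
                             + wt l (andL \<gamma> \<alpha>) + wt l (andL (andL d1 \<alpha>) c2)))
              (comp l r G
                 (toIS (xorL d1 d2) (xorL (andL (perpL (xorL d1 d2)) (xorL (xorL c1 c2) \<alpha>)) \<gamma>))
                 (mult v1 (mult a v2)))" if gam: "\<gamma> \<in> Z2sub (andL d1 d2)" for \<gamma>
    proof -
      have lg: "length \<gamma> = l + r" using gam lens unfolding Z2sub_def by simp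
      have gi: "\<gamma> ! i \<longrightarrow> d1 ! i \<and> d2 ! i" if i: "i < l + r" for i
      proof -
        have "andL (andL d1 d2) \<gamma> ! i = \<gamma> ! i" using gam unfolding Z2sub_def by simp
        then show ?thesis using i lens lg by auto
      qed
      define lp where "lp = toIS (xorL d1 d2) (xorL (andL (perpL (xorL d1 d2)) (xorL c1 c2)) \<gamma>)"
      define l0 where "l0 = toIS (xorL d1 d2) (xorL (andL (perpL (xorL d1 d2)) (xorL (xorL c1 c2) \<alpha>)) \<gamma>)"
      have lp_l: "lp \<in> lams l r" unfolding lp_def lams_iff using lens lg by simp
      have lp_nth: "lp ! i = toIS1 (d1 ! i \<noteq> d2 ! i) ((\<not>(d1 ! i \<noteq> d2 ! i) \<and> (c1 ! i \<noteq> c2 ! i)) \<noteq> \<gamma> ! i)"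
        if i: "i < l + r" for i
        unfolding lp_def using i lens lg by simp
      have sl: "sm mu lp = l0"
      proof (rule nth_equalityI)
        show "length (sm mu lp) = length l0" unfolding l0_def using lens lg lp_l mu_l by (simp add: lams_iff)
      next
        fix i assume "i < length (sm mu lp)"
        then have i: "i < l + r" using lp_l mu_l by (simp add: lams_iff)
        show "sm mu lp ! i = l0 ! i"
          using LF0[of "\<alpha> ! i" "d1 ! i \<noteq> d2 ! i" "c1 ! i \<noteq> c2 ! i" "\<gamma> ! i"] i lens lg lp_l mu_l
          by (simp add: l0_def lp_nth mu_nth lams_iff)
      qed
      have c1: "mult a (comp l r G lp (mult v1 v2)) =
         sc (lB l r (sm mu la2) lp (sm mu lp) la1 mu la2) (comp l r G (sm mu lp) (mult v1 (mult a v2)))"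
        by (rule C1[OF muS la1_l v1G la2_l v2G lp_l])
      define A where "A = (\<lambda>i. if (andL d1 \<alpha>) ! i then \<i> else (1::complex))"
      define B1 where "B1 = (\<lambda>i. if (andL \<alpha> c1) ! i then -1 else (1::complex))"
      define B2 where "B2 = (\<lambda>i. if (andL (andL d1 d2) \<alpha>) ! i then -1 else (1::complex))"
      define B3 where "B3 = (\<lambda>i. if (andL \<gamma> \<alpha>) ! i then -1 else (1::complex))"
      define B4 where "B4 = (\<lambda>i. if (andL (andL d1 \<alpha>) c2) ! i then -1 else (1::complex))"
      define E where "E = (\<lambda>i. if (andL d1 \<alpha>) ! i then -1 else (1::complex))"
      have "lB l r (sm mu la2) lp (sm mu lp) la1 mu la2 = PF l r (\<lambda>i. A i * (B1 i * B2 i * B3 i * B4 i) * E i)"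
        unfolding lB_PF
      proof (rule PF_cong)
        fix i assume i: "i < l + r"
        have e: "sm mu la2 ! i = sfu (toIS1 False (\<alpha> ! i)) (toIS1 (d2 ! i) (c2 ! i))"
          "sm mu lp ! i = sfu (toIS1 False (\<alpha> ! i)) (lp ! i)"
          using i mu_l la2_l lp_l mu_nth la2_nth by (simp_all add: lams_iff)
        show "Bc (sm mu la2 ! i) (lp ! i) (sm mu lp ! i) (la1 ! i) (mu ! i) (la2 ! i) =
            A i * (B1 i * B2 i * B3 i * B4 i) * E i"
          unfolding e lp_nth[OF i] la1_nth[OF i] la2_nth[OF i] mu_nth[OF i]
            LF1[OF dc1[OF i] dc2[OF i] gi[OF i]]
          using i lens lg by (simp add: A_def B1_def B2_def B3_def B4_def E_def)
      qed
      also have "\<dots> = PF l r A * (PF l r B1 * PF l r B2 * PF l r B3 * PF l r B4) * PF l r E"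
        by (simp only: PF_mult)
      also have "PF l r A = \<i> powi (wt l (andL d1 \<alpha>))"
        by (rule PF_pow') (use lens in \<open>auto simp: A_def\<close>)
      also have "PF l r B1 = (-1) powi (wt l (andL \<alpha> c1))"
        by (rule PF_pow') (use lens in \<open>auto simp: B1_def\<close>)
      also have "PF l r B2 = (-1) powi (wt l (andL (andL d1 d2) \<alpha>))"
        by (rule PF_pow') (use lens in \<open>auto simp: B2_def\<close>)
      also have "PF l r B3 = (-1) powi (wt l (andL \<gamma> \<alpha>))"
        by (rule PF_pow') (use lens lg in \<open>auto simp: B3_def\<close>)
      also have "PF l r B4 = (-1) powi (wt l (andL (andL d1 \<alpha>) c2))"
        by (rule PF_pow') (use lens in \<open>auto simp: B4_def\<close>)
      also have "PF l r E = (-1) powi (wt l (andL d1 \<alpha>))"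
        by (rule PF_pow') (use lens in \<open>auto simp: E_def\<close>)
      also have "(-1::complex) powi (wt l (andL d1 \<alpha>)) = 1" using minus_one_even[OF E2] .
      finally have co: "lB l r (sm mu la2) lp (sm mu lp) la1 mu la2 =
          \<i> powi (wt l (andL d1 \<alpha>)) * (-1) powi (wt l (andL \<alpha> c1) + wt l (andL (andL d1 d2) \<alpha>)
                             + wt l (andL \<gamma> \<alpha>) + wt l (andL (andL d1 \<alpha>) c2))"
        by (simp add: power_int_add)
      show ?thesis using c1 unfolding sl co[unfolded sl] lp_def[symmetric] l0_def[symmetric] .
    qed
    have part2: "mult a (mult v1 v2) = sc ((-1) powi (wt l (andL (perpL d1) \<alpha>) + wt l (andL (andL d1 \<alpha>) c2)))
              (mult (mult a v1) v2)"
    proof -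
      define K where "K = (-1::complex) powi (wt l (andL (andL d1 \<alpha>) c2))"
      have S: "(-1::complex) powi (wt l (andL (perpL d1) \<alpha>) + wt l (andL (andL d1 \<alpha>) c2)) = K"
        unfolding K_def by (simp add: power_int_add minus_one_even[OF E1])
      have KK: "K * K = 1" unfolding K_def by simp
      have per: "comp l r G (sm mu nu) (mult (mult a v1) v2) = sc K (mult a (comp l r G nu (mult v1 v2)))"
        if nu: "nu \<in> lams l r" for nu
      proof -
        define nu0 where "nu0 = sm mu nu"
        have nu0_l: "nu0 \<in> lams l r" unfolding nu0_def by (rule sm_lams[OF mu_l nu])
        have inv: "sm mu nu0 = nu" unfolding nu0_def using sm_inv[OF smp] nu mu_l by (simp add: lams_iff)
        define D where "D = lB l r la2 rho nu0 rho la2 (lzero l r)"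
        define N1 where "N1 = lB l r nu rho nu0 mu la2 la1"
        define N2 where "N2 = lB l r la2 la1 nu la1 la2 (lzero l r)"
        define Z where "Z = comp l r G nu0 (mult (mult a v1) v2)"
        define W where "W = mult a (comp l r G nu (mult v1 v2))"
        have e1: "comp l r G nu0 (mult v2 (mult a v1)) = sc D Z"
          unfolding D_def Z_def by (rule C3[OF rho_l av1G la2_l v2G nu0_l])
        have e2: "comp l r G nu0 (mult v2 (mult a v1)) = sc N1 (mult a (comp l r G nu (mult v2 v1)))"
          using C2[OF muS la2_l v2G la1_l v1G nu0_l] unfolding inv N1_def rho_def .
        have e3: "comp l r G nu (mult v2 v1) = sc N2 (comp l r G nu (mult v1 v2))"
          unfolding N2_def by (rule C3[OF la1_l v1G la2_l v2G nu])
        have eq: "sc D Z = sc (N1 * N2) W"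
          using e1 e2 e3 unfolding W_def by (simp add: mult_scR)
        have Dnz: "D \<noteq> 0" unfolding D_def lB_PF by (rule PF_nz) (rule Bc_nz)
        show ?thesis
        proof (cases "nu \<in> lfus la1 la2")
          case True
          have fu: "nu ! i \<in> fusion (toIS1 (d1 ! i) (c1 ! i)) (toIS1 (d2 ! i) (c2 ! i))" if i: "i < l + r" for i
            using True i la1_l la1_nth la2_nth by (auto simp: lfus_iff lams_iff)
          define kf where "kf = (\<lambda>i. if (andL (andL d1 \<alpha>) c2) ! i then -1 else (1::complex))"
          have "N1 * N2 = PF l r (\<lambda>i. kf i * Bc (la2 ! i) (rho ! i) (nu0 ! i) (rho ! i) (la2 ! i) (lzero l r ! i))"
            unfolding N1_def N2_def lB_PF PF_mult[symmetric]
          proof (rule PF_cong)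
            fix i assume i: "i < l + r"
            have e: "nu0 ! i = sfu (toIS1 False (\<alpha> ! i)) (nu ! i)" "lzero l r ! i = H0"
              using i mu_l nu mu_nth unfolding nu0_def by (simp_all add: lams_iff lzero_def)
            show "Bc (nu ! i) (rho ! i) (nu0 ! i) (mu ! i) (la2 ! i) (la1 ! i) *
                  Bc (la2 ! i) (la1 ! i) (nu ! i) (la1 ! i) (la2 ! i) (lzero l r ! i) =
                  kf i * Bc (la2 ! i) (rho ! i) (nu0 ! i) (rho ! i) (la2 ! i) (lzero l r ! i)"
              unfolding e rho_nth[OF i] la1_nth[OF i] la2_nth[OF i] mu_nth[OF i]
                LF2[OF dc1[OF i] dc2[OF i] fu[OF i]]
              using i lens by (simp add: kf_def)
          qed
          also have "\<dots> = PF l r kf * D" unfolding D_def lB_PF by (rule PF_mult)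
          also have "PF l r kf = K" unfolding K_def by (rule PF_pow') (use lens in \<open>auto simp: kf_def\<close>)
          finally have "N1 * N2 = K * D" .
          then have "sc D Z = sc D (sc K W)" using eq by (simp add: mult.commute)
          then have "Z = sc K W" using Dnz scale_cancel_left by blast
          then show ?thesis unfolding Z_def W_def nu0_def .
        next
          case False
          have W0: "comp l r G nu (mult v1 v2) = 0"
            by (rule comp_span[OF FA3[OF la1_l la2_l v1G v2G] False])
          have "nu0 \<notin> lfus rho la2"
          proof
            assume "nu0 \<in> lfus rho la2"
            then have "nu \<in> lfus la1 la2" using mu_l nu la1_l rho_l smp
              unfolding nu0_def rho_def by (auto simp: lfus_iff lams_iff smp_def intro: L3)
            then show False using False by simp
          qed
          then have Z0: "Z = 0" unfolding Z_def by (rule comp_span[OF FA3[OF rho_l la2_l av1G v2G]])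
          show ?thesis using W0 Z0 unfolding Z_def nu0_def by (simp add: mult_0R sc0)
        qed
      qed
      have "mult (mult a v1) v2 = (\<Sum>k\<in>lams l r. comp l r G k (mult (mult a v1) v2))"
        by (rule comp_sum)
      also have "\<dots> = (\<Sum>nu\<in>lams l r. comp l r G (sm mu nu) (mult (mult a v1) v2))"
      proof (rule sum.reindex_bij_witness[where i = "sm mu" and j = "sm mu"])
        fix k assume "k \<in> lams l r"
        then show "sm mu (sm mu k) = k" "sm mu k \<in> lams l r"
          using sm_inv[OF smp] sm_lams[OF mu_l] mu_l by (auto simp: lams_iff)
      next
        fix k assume "k \<in> lams l r"
        then show "sm mu (sm mu k) = k" "sm mu k \<in> lams l r"
          using sm_inv[OF smp] sm_lams[OF mu_l] mu_l by (auto simp: lams_iff)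
      qed (use sm_inv[OF smp] mu_l in \<open>auto simp: lams_iff\<close>)
      also have "\<dots> = (\<Sum>nu\<in>lams l r. sc K (mult a (comp l r G nu (mult v1 v2))))"
        using per by (intro sum.cong) auto
      also have "\<dots> = sc K (mult a (\<Sum>nu\<in>lams l r. comp l r G nu (mult v1 v2)))"
        by (simp add: scale_sum_right mult_sumR)
      also have "(\<Sum>nu\<in>lams l r. comp l r G nu (mult v1 v2)) = mult v1 v2"
        using comp_sum[of "mult v1 v2"] by simp
      finally have "sc K (mult (mult a v1) v2) = sc (K * K) (mult a (mult v1 v2))" by simp
      then show ?thesis unfolding S using KK by simp
    qed
    show ?thesis using part1 part2 by blast
  qed
qed

end
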